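(* Let $A$ be an integral domain. If the polynomial $a_0+a_1x+\cdots+a_nx^n\in A[x]$ is divisible by $p^m$, where $p\in A[x]$ and $m\in\mathbb{N}$, then for all $z_1,z_2\in\mathbb{Z}$ and every $k\in\mathbb{N}$ with $k\le m$, the polynomial $\sum_{r=0}^n\binom{z_1+z_2r}{k}a_rx^r\in A[x]$ is divisible by $p^{m-k}$.
   Context: $\binom{z}{k}=z(z-1)\cdots(z-k+1)/k!$ for $z\in\mathbb{Z}$, $k\in\mathbb{N}$ (an integer). *)

theory Defs
  imports "HOL-Computational_Algebra.Polynomial"
begin

text \<open>Integer binomial coefficient, as in the paper:
  binom z k = z (z-1) ... (z-k+1) / k!  for z an integer and k a natural number
  (the division is exact).\<close>
definition int_binom :: "int \<Rightarrow> nat \<Rightarrow> int" where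
  "int_binom z k = (\<Prod>i<k. z - int i) div fact k"

end

theory Submission
  imports Defs "HOL-Computational_Algebra.Formal_Power_Series" HOL.Binomial_Plus
begin

lemma int_binom_rat: "(of_int (int_binom z k) :: rat) = of_int z gchoose k"
  using of_int_gbinomial[of z k] gbinomial_prod_rev[of z k]
  by (simp add: int_binom_def atLeast0LessThan)

lemma int_vandermonde:
  "(\<Sum>i=0..n. int_binom a i * int_binom b (n-i)) = int_binom (a+b) n"
proof -
  have "(of_int (\<Sum>i=0..n. int_binom a i * int_binom b (n-i)) :: rat) = of_int (int_binom (a+b) n)"
    by (simp add: int_binom_rat gbinomial_Vandermonde)
  then show ?thesis by (simp only: of_int_eq_iff)
qed

lemma int_binom_0: "int_binom 0 k = (if k = 0 then 1 else 0)"
proof -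
  have "(of_int (int_binom 0 k) :: rat) = of_int (if k = 0 then 1 else 0)"
    by (simp add: int_binom_rat gbinomial_0_left)
  then show ?thesis by (simp only: of_int_eq_iff)
qed

definition Bf :: "int \<Rightarrow> 'a::comm_ring_1 poly fps" where
  "Bf z = Abs_fps (\<lambda>k. of_int (int_binom z k))"

lemma Bf_add: "Bf a * Bf b = (Bf (a+b) :: 'a::comm_ring_1 poly fps)"
proof (rule fps_ext)
  fix n
  have "fps_nth (Bf a * Bf b :: 'a poly fps) n = of_int (\<Sum>i=0..n. int_binom a i * int_binom b (n-i))"
    by (simp add: Bf_def fps_mult_nth)
  also have "\<dots> = fps_nth (Bf (a+b)) n" by (simp add: int_vandermonde Bf_def)
  finally show "fps_nth (Bf a * Bf b :: 'a poly fps) n = fps_nth (Bf (a+b)) n" .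
qed

lemma Bf_0: "Bf 0 = 1"
  by (rule fps_ext) (simp add: Bf_def int_binom_0)

lemma Bf_pow: "Bf z ^ r = Bf (z * int r)"
proof (induction r)
  case 0 then show ?case by (simp add: Bf_0)
next
  case (Suc r)
  then show ?case by (simp add: Bf_add algebra_simps)
qed

definition hh :: "'a::comm_ring_1 \<Rightarrow> 'a poly fps" where "hh c = fps_const [:c:]"

definition sig :: "int \<Rightarrow> 'a::comm_ring_1 poly \<Rightarrow> 'a poly fps" where
  "sig z f = poly (map_poly hh f) (fps_const [:0,1:] * Bf z)"

lemma hh0 [simp]: "hh 0 = 0" by (simp add: hh_def)

lemma sig_add: "sig z (f + g) = sig z f + sig z g"
proof -
  have "map_poly hh (f+g) = map_poly hh f + map_poly hh g"
    by (rule poly_eqI) (simp add: coeff_map_poly hh_def)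
  then show ?thesis by (simp add: sig_def)
qed

lemma sig_zero [simp]: "sig z 0 = 0" by (simp add: sig_def)

lemma sig_smult: "sig z (smult c g) = hh c * sig z g"
proof -
  have "map_poly hh (smult c g) = smult (hh c) (map_poly hh g)"
    by (rule poly_eqI) (simp add: coeff_map_poly hh_def mult.commute)
  then show ?thesis by (simp add: sig_def)
qed

lemma sig_pCons: "sig z (pCons a g) = hh a + fps_const [:0,1:] * Bf z * sig z g"
  by (simp add: sig_def map_poly_pCons)

lemma sig_pCons0: "sig z (pCons 0 g) = fps_const [:0,1:] * Bf z * sig z g"
  using sig_pCons[of z 0 g] by simp

lemma sig_mult: "sig z (f * g) = sig z f * sig z g"
proof (induction f rule: pCons_induct)
  case 0 then show ?case by simp
next
  case (pCons a p)
  have "sig z (pCons a p * g) = sig z (smult a g + pCons 0 (p * g))"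
    by (simp add: mult_pCons_left)
  also have "\<dots> = hh a * sig z g + fps_const [:0,1:] * Bf z * (sig z p * sig z g)"
    by (simp add: sig_add sig_smult sig_pCons0 pCons.IH)
  also have "\<dots> = sig z (pCons a p) * sig z g"
    by (simp add: sig_pCons algebra_simps)
  finally show ?case .
qed

lemma sig_power: "sig z (f ^ m) = sig z f ^ m"
proof (induction m)
  case 0
  have "sig z 1 = 1" using sig_pCons[of z 1 0] by (simp add: hh_def flip: one_pCons)
  then show ?case by simp
next
  case (Suc m) then show ?case by (simp add: sig_mult)
qed

lemma sig_monom: "sig z (monom c r) = hh c * (fps_const [:0,1:] * Bf z) ^ r"
  by (simp add: sig_def map_poly_monom poly_monom)

lemma sig_sum: "sig z (\<Sum>r\<le>(n::nat). g r) = (\<Sum>r\<le>n. sig z (g r))"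
  by (induction n) (simp_all add: sig_add)

lemma term_main:
  "Bf c * (hh e * (fps_const [:0,1:] * Bf z) ^ r) = fps_const (monom e r) * Bf (c + z * int r)"
proof -
  have 1: "(fps_const [:0,1:] * Bf z) ^ r = fps_const ([:0,1:] ^ r) * Bf z ^ r"
    by (simp only: power_mult_distrib fps_const_power)
  have 2: "fps_const (monom e r) = hh e * fps_const ([:0,1:] ^ r)"
    by (simp only: hh_def fps_const_mult monom_altdef) simp
  have "Bf c * (hh e * (fps_const [:0,1:] * Bf z) ^ r)
      = (hh e * fps_const ([:0,1:] ^ r)) * (Bf c * Bf z ^ r)"
    unfolding 1 by (simp only: ac_simps)
  also have "\<dots> = fps_const (monom e r) * Bf (c + z * int r)"
    by (simp only: 2 Bf_pow Bf_add)
  finally show ?thesis .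
qed

lemma coeff_main:
  "fps_nth (Bf c * sig z (\<Sum>r\<le>n. monom (a r) r)) j
     = (\<Sum>r\<le>n. monom (of_int (int_binom (c + z * int r) j) * a r) r)"
proof -
  have "Bf c * sig z (\<Sum>r\<le>n. monom (a r) r)
      = (\<Sum>r\<le>n. fps_const (monom (a r) r) * Bf (c + z * int r))"
    by (simp add: sig_sum sig_monom sum_distrib_left term_main)
  then show ?thesis
    by (simp add: fps_sum_nth Bf_def of_int_poly smult_monom)
qed

lemma good_step:
  fixes H F :: "'a::comm_ring_1 poly fps"
  assumes "fps_nth H 0 = p" "\<And>j. p ^ (m - j) dvd fps_nth F j"
  shows "p ^ (Suc m - j) dvd fps_nth (H * F) j"
proof -
  have "p ^ (Suc m - j) dvd fps_nth H i * fps_nth F (j - i)" if "i \<in> {0..j}" for i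
  proof (cases "i = 0")
    case True
    have "p ^ (Suc m - j) dvd p * p ^ (m - j)"
    proof (cases "j \<le> m")
      case True then have "Suc m - j = Suc (m - j)" by simp
      then show ?thesis by simp
    next
      case False then have "Suc m - j = 0" by simp
      then show ?thesis by simp
    qed
    also have "\<dots> dvd p * fps_nth F j" using assms(2)[of j] by (simp add: mult_dvd_mono)
    finally show ?thesis using True assms(1) by simp
  next
    case False
    have "p ^ (Suc m - j) dvd p ^ (m - (j - i))"
      using False that by (intro le_imp_power_dvd) auto
    also have "\<dots> dvd fps_nth F (j - i)" by (rule assms(2))
    finally show ?thesis by (rule dvd_mult)
  qed
  then show ?thesis unfolding fps_mult_nth by (intro dvd_sum) auto
qed

lemma good_mult:
  fixes G F :: "'a::comm_ring_1 poly fps"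
  assumes "\<And>j. p ^ (m - j) dvd fps_nth F j"
  shows "p ^ (m - j) dvd fps_nth (G * F) j"
proof -
  have "p ^ (m - j) dvd fps_nth G i * fps_nth F (j - i)" if "i \<in> {0..j}" for i
  proof -
    have "p ^ (m - j) dvd p ^ (m - (j - i))"
      using that by (intro le_imp_power_dvd) auto
    also have "\<dots> dvd fps_nth F (j - i)" by (rule assms)
    finally show ?thesis by (rule dvd_mult)
  qed
  then show ?thesis unfolding fps_mult_nth by (intro dvd_sum) auto
qed

lemma good_pow:
  fixes H :: "'a::comm_ring_1 poly fps"
  assumes "fps_nth H 0 = p"
  shows "p ^ (m - j) dvd fps_nth (H ^ m) j"
proof (induction m arbitrary: j)
  case 0 then show ?case by simp
next
  case (Suc m)
  show ?case using good_step[OF assms Suc.IH] by simp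
qed

lemma sig_nth0: "fps_nth (sig z p) 0 = p"
proof -
  have e: "Bf 0 * sig z (\<Sum>r\<le>degree p. monom (coeff p r) r) = sig z p"
    by (simp only: Bf_0 mult_1 poly_as_sum_of_monoms)
  have "fps_nth (Bf 0 * sig z (\<Sum>r\<le>degree p. monom (coeff p r) r)) 0
     = (\<Sum>r\<le>degree p. monom (of_int (int_binom (0 + z * int r) 0) * coeff p r) r)"
    by (rule coeff_main)
  also have "\<dots> = p" by (simp add: int_binom_def poly_as_sum_of_monoms)
  finally show ?thesis by (simp only: e)
qed

theorem lemma4p1:
  fixes a :: "nat \<Rightarrow> 'a::idom" and n m k :: nat and p :: "'a poly" and z1 z2 :: int
  assumes "p ^ m dvd (\<Sum>r\<le>n. monom (a r) r)"
    and "k \<le> m"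
  shows "p ^ (m - k) dvd (\<Sum>r\<le>n. monom (of_int (int_binom (z1 + z2 * int r) k) * a r) r)"
proof -
  obtain q where q: "(\<Sum>r\<le>n. monom (a r) r) = p ^ m * q" using assms(1) by (auto elim: dvdE)
  have e1: "Bf z1 * sig z2 (\<Sum>r\<le>n. monom (a r) r) = (Bf z1 * sig z2 q) * sig z2 p ^ m"
    by (simp only: q sig_mult sig_power) (simp add: ac_simps)
  have d: "p ^ (m - k) dvd fps_nth ((Bf z1 * sig z2 q) * sig z2 p ^ m) k"
    by (rule good_mult) (rule good_pow[OF sig_nth0])
  have e3: "fps_nth (Bf z1 * sig z2 (\<Sum>r\<le>n. monom (a r) r)) k
      = (\<Sum>r\<le>n. monom (of_int (int_binom (z1 + z2 * int r) k) * a r) r)"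
    by (rule coeff_main)
  show ?thesis using d unfolding e1[symmetric] e3 .
qed

end
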